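(* If $\phi\in\mathcal{I}$, then $\lim_{r\to\infty}\frac{\phi(r)}{r^2}=\infty$.
   Context: The class $\mathcal{I}$: $\phi:[0,\infty)\to(0,\infty)$ is twice continuously differentiable, extended by $\phi(z)=\phi(|z|)$, with $\Delta\phi>0$, and there exist a positive differentiable radial $\tau$ and a constant $C>0$ with $\tau(z)=C$ for $|z|<1$ and $C^{-1}(\Delta\phi(|z|))^{-1/2}\le\tau(z)\le C(\Delta\phi(|z|))^{-1/2}$ for $|z|\ge1$; $\tau(z)\to0$ as $|z|\to\infty$, $\tau'(r)\to0$, and either $\tau(r)r^{c}$ increases for large $r$ for some $c>0$ or $\lim_{r\to\infty}\tau'(r)\log\frac1{\tau(r)}=0$. *)

theory Defs
  imports "HOL-Analysis.Analysis"
begin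

text \<open>Laplacian of the radial extension z \<mapsto> phi(|z|) on the plane, written in polar
  form at radius r > 0, given the first and second derivatives phi1, phi2 of the profile.\<close>
definition radial_lap :: "(real \<Rightarrow> real) \<Rightarrow> (real \<Rightarrow> real) \<Rightarrow> real \<Rightarrow> real" where
  "radial_lap phi1 phi2 r = phi2 r + phi1 r / r"

text \<open>The class I. phi is the radial profile on [0,oo), tau the radial profile of the
  radial function tau(z) = tau(|z|); tau' is the radial derivative.\<close>
definition class_I :: "(real \<Rightarrow> real) \<Rightarrow> bool" where
  "class_I phi \<longleftrightarrow>
     (\<forall>r\<ge>0. phi r > 0) \<and>
     (\<exists>phi1 phi2.
        (\<forall>r\<ge>0. (phi has_real_derivative phi1 r) (at r within {0..}) \<and>
                (phi1 has_real_derivative phi2 r) (at r within {0..})) \<and>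
        continuous_on {0..} phi2 \<and>
        (\<forall>r>0. radial_lap phi1 phi2 r > 0) \<and>
        (\<exists>tau C. C > 0 \<and>
           (\<forall>r\<ge>0. tau r > 0) \<and>
           (\<forall>r>0. tau differentiable (at r)) \<and>
           (\<forall>r. 0 \<le> r \<and> r < 1 \<longrightarrow> tau r = C) \<and>
           (\<forall>r\<ge>1. inverse C * (radial_lap phi1 phi2 r) powr (-1/2) \<le> tau r \<and>
                   tau r \<le> C * (radial_lap phi1 phi2 r) powr (-1/2)) \<and>
           (tau \<longlongrightarrow> 0) at_top \<and>
           (deriv tau \<longlongrightarrow> 0) at_top \<and>
           ((\<exists>c>0. \<exists>R. \<forall>x y. R \<le> x \<longrightarrow> x \<le> y \<longrightarrow>
                 tau x * x powr c \<le> tau y * y powr c) \<or>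
            ((\<lambda>r. deriv tau r * ln (1 / tau r)) \<longlongrightarrow> 0) at_top)))"

end

theory Submission
  imports Defs
begin

lemma main_aux:
  fixes phi phi1 phi2 L :: "real \<Rightarrow> real"
  assumes d1: "\<And>r. r > 0 \<Longrightarrow> (phi has_real_derivative phi1 r) (at r)"
    and d2: "\<And>r. r > 0 \<Longrightarrow> (phi1 has_real_derivative phi2 r) (at r)"
    and L: "filterlim (\<lambda>r. phi2 r + phi1 r / r) at_top at_top"
  shows "filterlim (\<lambda>r. phi r / r\<^sup>2) at_top at_top"
proof (subst filterlim_at_top, intro allI)
  fix Z :: real
  define M where "M = 4 * (\<bar>Z\<bar> + 1)"
  obtain R0 where R0: "\<And>r. r \<ge> R0 \<Longrightarrow> phi2 r + phi1 r / r \<ge> M"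
    using L unfolding filterlim_at_top eventually_at_top_linorder by blast
  define R where "R = max R0 1"
  have R1: "R \<ge> 1" and RR: "\<And>r. r \<ge> R \<Longrightarrow> phi2 r + phi1 r / r \<ge> M"
    using R0 unfolding R_def by auto
  define A where "A = R * phi1 R - M * R^2 / 2"
  have g: "r * phi1 r - M * r^2 / 2 \<ge> A" if "r \<ge> R" for r
  proof -
    have "(\<lambda>r. r * phi1 r - M * r^2 / 2) R \<le> (\<lambda>r. r * phi1 r - M * r^2 / 2) r"
    proof (rule DERIV_nonneg_imp_nondecreasing[OF that])
      fix x assume x: "R \<le> x" "x \<le> r"
      have "DERIV (\<lambda>r. r * phi1 r - M * r^2 / 2) x :> (1 * phi1 x + x * phi2 x - M * (2 * x) / 2)"
        using x R1 by (auto intro!: derivative_eq_intros d2)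
      moreover have "1 * phi1 x + x * phi2 x - M * (2 * x) / 2 \<ge> 0"
      proof -
        have "phi2 x + phi1 x / x \<ge> M" using RR x by auto
        hence "x * (phi2 x + phi1 x / x) \<ge> x * M" using x R1 by (intro mult_left_mono) auto
        thus ?thesis using x R1 by (simp add: algebra_simps)
      qed
      ultimately show "\<exists>y. DERIV (\<lambda>r. r * phi1 r - M * r^2 / 2) x :> y \<and> y \<ge> 0" by blast
    qed
    thus ?thesis unfolding A_def by simp
  qed
  define B where "B = phi R - M * R^2 / 4 - A * ln R"
  have k: "phi r - M * r^2 / 4 - A * ln r \<ge> B" if "r \<ge> R" for r
  proof -
    have "(\<lambda>r. phi r - M * r^2 / 4 - A * ln r) R \<le> (\<lambda>r. phi r - M * r^2 / 4 - A * ln r) r"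
    proof (rule DERIV_nonneg_imp_nondecreasing[OF that])
      fix x assume x: "R \<le> x" "x \<le> r"
      have "DERIV (\<lambda>r. phi r - M * r^2 / 4 - A * ln r) x :> (phi1 x - M * (2 * x) / 4 - A * (1 / x))"
        using x R1 by (auto intro!: derivative_eq_intros d1)
      moreover have "phi1 x - M * (2 * x) / 4 - A * (1 / x) \<ge> 0"
      proof -
        have "x * phi1 x - M * x^2 / 2 \<ge> A" using g x by auto
        hence "(x * phi1 x - M * x^2 / 2) / x \<ge> A / x" using x R1 by (intro divide_right_mono) auto
        thus ?thesis using x R1 by (simp add: field_simps power2_eq_square)
      qed
      ultimately show "\<exists>y. DERIV (\<lambda>r. phi r - M * r^2 / 4 - A * ln r) x :> y \<and> y \<ge> 0" by blast
    qed
    thus ?thesis unfolding B_def by simp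
  qed
  have ev: "eventually (\<lambda>r. (B + A * ln r) / r^2 > -1) at_top"
    using eventually_ge_at_top[of "\<bar>A\<bar> + \<bar>B\<bar> + 1"]
  proof eventually_elim
    case (elim r)
    have r1: "r \<ge> 1" using elim by simp
    have "ln r \<le> r" using r1 ln_le_minus_one[of r] by linarith
    moreover have "ln r \<ge> 0" using r1 by simp
    ultimately have "\<bar>A * ln r\<bar> \<le> \<bar>A\<bar> * r" by (simp add: abs_mult mult_left_mono)
    moreover have "\<bar>A\<bar> * r + \<bar>B\<bar> < r * r"
    proof -
      have "(\<bar>A\<bar> + \<bar>B\<bar> + 1) * r \<le> r * r" using elim r1 by (intro mult_right_mono) auto
      moreover have "\<bar>B\<bar> \<le> \<bar>B\<bar> * r" using r1 by (simp add: mult_left_mono[of 1 r, simplified] )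
      ultimately show ?thesis using r1 by (simp add: algebra_simps)
    qed
    ultimately have "B + A * ln r > - (r^2)" by (simp add: power2_eq_square)
    thus ?case using r1 by (simp add: field_simps)
  qed
  show "eventually (\<lambda>r. Z \<le> phi r / r\<^sup>2) at_top"
    using ev eventually_ge_at_top[of R]
  proof eventually_elim
    case (elim r)
    have h4: "4 * (\<bar>Z\<bar> + 1) / 4 = \<bar>Z\<bar> + 1" by simp
    have rp: "r^2 > 0" using elim R1 by auto
    have "phi r \<ge> M * r^2 / 4 + (B + A * ln r)" using k[OF elim(2)] by simp
    hence "phi r / r^2 \<ge> (M * r^2 / 4 + (B + A * ln r)) / r^2" using rp by (intro divide_right_mono) auto
    also have "(M * r^2 / 4 + (B + A * ln r)) / r^2 = M / 4 + (B + A * ln r) / r^2"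
      using rp by (simp add: field_simps)
    finally show ?case using elim(1) unfolding M_def using abs_ge_self[of Z] h4 by linarith
  qed
qed

theorem lemma2p6:
  fixes phi :: "real \<Rightarrow> real"
  assumes "class_I phi"
  shows "filterlim (\<lambda>r. phi r / r\<^sup>2) at_top at_top"
proof -
  note A = assms[unfolded class_I_def]
  obtain phi1 phi2 tau C where
    d: "\<forall>r\<ge>0. (phi has_real_derivative phi1 r) (at r within {0..}) \<and>
                (phi1 has_real_derivative phi2 r) (at r within {0..})"
    and pos: "\<forall>r>0. radial_lap phi1 phi2 r > 0"
    and C: "C > 0"
    and tb: "\<forall>r\<ge>1. inverse C * (radial_lap phi1 phi2 r) powr (-1/2) \<le> tau r \<and>
                   tau r \<le> C * (radial_lap phi1 phi2 r) powr (-1/2)"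
    and tl: "(tau \<longlongrightarrow> 0) at_top"
    using A apply (elim conjE exE) by (rule that) assumption+
  have at: "at r within {0..} = at r" if "r > 0" for r :: real
    using that by (intro at_within_interior) simp
  have d1: "(phi has_real_derivative phi1 r) (at r)" if "r > 0" for r
  proof -
    have "(phi has_real_derivative phi1 r) (at r within {0..})" using d that by simp
    thus ?thesis using at[OF that] by simp
  qed
  have d2: "(phi1 has_real_derivative phi2 r) (at r)" if "r > 0" for r
  proof -
    have "(phi1 has_real_derivative phi2 r) (at r within {0..})" using d that by simp
    thus ?thesis using at[OF that] by simp
  qed
  have L: "filterlim (\<lambda>r. phi2 r + phi1 r / r) at_top at_top"
  proof (subst filterlim_at_top_gt[where c=0], intro allI impI)
    fix Z :: real assume Z: "Z > 0"
    have pZ: "1 / (C * sqrt Z) > 0" using Z C by simp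
    have "eventually (\<lambda>r. tau r < 1 / (C * sqrt Z)) at_top"
      using tl pZ by (rule order_tendstoD)
    thus "eventually (\<lambda>r. Z \<le> phi2 r + phi1 r / r) at_top"
      using eventually_ge_at_top[of 1]
    proof eventually_elim
      case (elim r)
      define L where "L = phi2 r + phi1 r / r"
      have Lp: "L > 0" using pos elim(2) unfolding L_def radial_lap_def by simp
      have "inverse C * L powr (-1/2) \<le> tau r" using tb elim(2) unfolding L_def radial_lap_def by simp
      moreover have "L powr (-1/2) = 1 / sqrt L"
        using Lp by (simp add: powr_minus_divide powr_half_sqrt)
      moreover have "inverse C * (1 / sqrt L) = 1 / (C * sqrt L)" by (simp add: field_simps)
      ultimately have lt: "1 / (C * sqrt L) < 1 / (C * sqrt Z)" using elim(1) by simp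
      have "C * sqrt Z < C * sqrt L"
      proof (rule ccontr)
        assume "\<not> C * sqrt Z < C * sqrt L"
        hence "C * sqrt L \<le> C * sqrt Z" by simp
        moreover have "C * sqrt L > 0" using C Lp by simp
        ultimately have "1 / (C * sqrt Z) \<le> 1 / (C * sqrt L)"
          by (intro divide_left_mono) auto
        thus False using lt by simp
      qed
      hence "sqrt Z < sqrt L" using C by simp
      thus ?case unfolding L_def[symmetric] by simp
    qed
  qed
  show ?thesis by (rule main_aux[OF d1 d2 L])
qed

end
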